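(* Let $R$ be Rado's poset. Then $\bigcup AM_m(R)$ is bqo for every integer $m$, and $R$ embeds into $AM(R)$.
   Context: Rado's poset $R$ has underlying set $V=\{(m,n)\in\mathbb{N}^2: m<n\}$ with $(m,n)\leq_R(m',n')$ iff either ($m=m'$ and $n\leq n'$) or $n<m'$. $AM(R)$ is the set of maximal antichains of $R$ ordered by domination ($X\leq Y$ iff each $x\in X$ is below some $y\in Y$); $AM_m(R)$ is the set of maximal antichains with exactly $m$ elements, and $\bigcup AM_m(R)$ is the union of these antichains with the order induced by $R$. An embedding is a map $e$ with $x\leq y\iff e(x)\leq e(y)$. Barriers and bqo: finite subsets of $\mathbb{N}$ are identified with their increasing enumerations; $s\triangleleft t$ means there is a finite $r\subseteq\mathbb{N}$ with $s$ a proper initial segment of $r$ and $t$ equal to $r$ minus its least element. A barrier is an infinite set $B$ of finite subsets of $\mathbb{N}$, no member a proper subset of another, such that every infinite $X\subseteq\bigcup B$ has a nonempty initial segment in $B$; its order type is that of $B$ under the lexicographic order. A map $f$ from a barrier into a quasi-order $Q$ is good if $f(s)\leq f(t)$ for some $s\triangleleft t$; $Q$ is $\alpha$-bqo if every map from a barrier of order type at most $\alpha$ into $Q$ is good, and bqo if it is $\alpha$-bqo for all countable $\alpha$. *)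

theory Defs
  imports Main
begin

definition rado_V :: "(nat \<times> nat) set" where
  "rado_V = {(m, n). m < n}"

definition rado_le :: "nat \<times> nat \<Rightarrow> nat \<times> nat \<Rightarrow> bool" where
  "rado_le x y = ((fst x = fst y \<and> snd x \<le> snd y) \<or> snd x < fst y)"

definition antichain_on :: "'a set \<Rightarrow> ('a \<Rightarrow> 'a \<Rightarrow> bool) \<Rightarrow> 'a set \<Rightarrow> bool" where
  "antichain_on P le A = (A \<subseteq> P \<and> (\<forall>x\<in>A. \<forall>y\<in>A. x \<noteq> y \<longrightarrow> \<not> le x y \<and> \<not> le y x))"

definition max_antichain_on :: "'a set \<Rightarrow> ('a \<Rightarrow> 'a \<Rightarrow> bool) \<Rightarrow> 'a set \<Rightarrow> bool" where
  "max_antichain_on P le A =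
     (antichain_on P le A \<and> (\<forall>B. antichain_on P le B \<and> A \<subseteq> B \<longrightarrow> B = A))"

definition AM :: "(nat \<times> nat) set set" where
  "AM = {A. max_antichain_on rado_V rado_le A}"

definition AM_card :: "nat \<Rightarrow> (nat \<times> nat) set set" where
  "AM_card m = {A \<in> AM. finite A \<and> card A = m}"

definition dominated :: "('a \<Rightarrow> 'a \<Rightarrow> bool) \<Rightarrow> 'a set \<Rightarrow> 'a set \<Rightarrow> bool" where
  "dominated le X Y = (\<forall>x\<in>X. \<exists>y\<in>Y. le x y)"

definition initial_segment :: "nat set \<Rightarrow> nat set \<Rightarrow> bool" where
  "initial_segment s r = (s \<subseteq> r \<and> (\<forall>x\<in>s. \<forall>y\<in>r. y < x \<longrightarrow> y \<in> s))"

definition shift_rel :: "nat set \<Rightarrow> nat set \<Rightarrow> bool" (infix "\<lhd>\<^sub>B" 50) where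
  "s \<lhd>\<^sub>B t = (\<exists>r. finite r \<and> initial_segment s r \<and> s \<noteq> r \<and> t = r - {Min r})"

definition barrier :: "nat set set \<Rightarrow> bool" where
  "barrier B =
     (infinite B \<and> (\<forall>s\<in>B. finite s)
      \<and> (\<forall>s\<in>B. \<forall>t\<in>B. \<not> s \<subset> t)
      \<and> (\<forall>X. infinite X \<and> X \<subseteq> \<Union>B \<longrightarrow>
             (\<exists>s\<in>B. s \<noteq> {} \<and> initial_segment s X)))"

definition good_map :: "('a \<Rightarrow> 'a \<Rightarrow> bool) \<Rightarrow> nat set set \<Rightarrow> (nat set \<Rightarrow> 'a) \<Rightarrow> bool" where
  "good_map le B f = (\<exists>s\<in>B. \<exists>t\<in>B. s \<lhd>\<^sub>B t \<and> le (f s) (f t))"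

text \<open>bqo: every map from a barrier into Q is good. (Every barrier has countable order
  type, so this is the same as being alpha-bqo for all countable alpha.)\<close>

definition bqo_on :: "'a set \<Rightarrow> ('a \<Rightarrow> 'a \<Rightarrow> bool) \<Rightarrow> bool" where
  "bqo_on Q le = (\<forall>B f. barrier B \<and> (\<forall>s\<in>B. f s \<in> Q) \<longrightarrow> good_map le B f)"

end

theory Submission
  imports Defs
begin


definition gE :: "nat \<Rightarrow> nat \<Rightarrow> nat \<Rightarrow> nat" where
  "gE m n i = (if i = m then 2*n+3 else if i = 2*m+2 then 2*m+3 else 2*m+2)"

definition eA :: "nat \<times> nat \<Rightarrow> (nat \<times> nat) set" where
  "eA x = (\<lambda>i. (i, gE (fst x) (snd x) i)) ` {..2*fst x+2}"

lemma eA_AM: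
  assumes "m < n" shows "eA (m,n) \<in> AM"
proof -
  have ac: "antichain_on rado_V rado_le (eA (m,n))"
    unfolding antichain_on_def eA_def rado_V_def rado_le_def gE_def using assms by auto
  have mx: "B = eA (m,n)" if B: "antichain_on rado_V rado_le B" and sub: "eA (m,n) \<subseteq> B" for B
  proof
    show "B \<subseteq> eA (m,n)"
    proof
      fix x assume xB: "x \<in> B"
      obtain c d where x: "x = (c,d)" by (cases x)
      show "x \<in> eA (m,n)"
      proof (cases "c \<le> 2*m+2")
        case True
        have y: "(c, gE m n c) \<in> B" using sub True unfolding eA_def by auto
        have "x = (c, gE m n c)"
        proof (rule ccontr)
          assume "x \<noteq> (c, gE m n c)"
          then show False using B xB y unfolding antichain_on_def rado_le_def x
            by (metis fst_conv nle_le snd_conv)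
        qed
        then show ?thesis using True unfolding eA_def by auto
      next
        case False
        have y: "(m+1, gE m n (m+1)) \<in> B" using sub unfolding eA_def by auto
        have g: "gE m n (m+1) = 2*m+2" unfolding gE_def by auto
        have "x \<noteq> (m+1, gE m n (m+1))" using False x by auto
        then have "\<not> rado_le (m+1, 2*m+2) (c,d)" using B xB y unfolding antichain_on_def x g
          by auto
        then show ?thesis using False unfolding rado_le_def by auto
      qed
    qed
  qed (use sub in auto)
  show ?thesis unfolding AM_def max_antichain_on_def using ac mx by auto
qed

lemma eA_iff:
  assumes "m < n" "m' < n'"
  shows "rado_le (m,n) (m',n') \<longleftrightarrow> dominated rado_le (eA (m,n)) (eA (m',n'))"
proof
  assume h: "rado_le (m,n) (m',n')"
  show "dominated rado_le (eA (m,n)) (eA (m',n'))"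
    unfolding dominated_def
  proof
    fix x assume "x \<in> eA (m,n)"
    then obtain i where i: "i \<le> 2*m+2" "x = (i, gE m n i)" unfolding eA_def by auto
    show "\<exists>y\<in>eA (m',n'). rado_le x y"
    proof (cases "m = m' \<and> n \<le> n'")
      case True
      then show ?thesis using i unfolding eA_def rado_le_def gE_def
        by (intro bexI[of _ "(i, gE m' n' i)"]) (auto simp: gE_def)
    next
      case False
      then have "n < m'" using h unfolding rado_le_def by auto
      then show ?thesis using i assms unfolding eA_def rado_le_def
        by (intro bexI[of _ "(2*m'+2, gE m' n' (2*m'+2))"]) (auto simp: gE_def)
    qed
  qed
next
  assume h: "dominated rado_le (eA (m,n)) (eA (m',n'))"
  show "rado_le (m,n) (m',n')"
  proof (rule ccontr)
    assume nh: "\<not> rado_le (m,n) (m',n')"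
    define i where "i = (if m' < m then 2*m+2 else m)"
    have "(i, gE m n i) \<in> eA (m,n)" unfolding eA_def i_def by auto
    then obtain j where j: "j \<le> 2*m'+2" "rado_le (i, gE m n i) (j, gE m' n' j)"
      using h unfolding dominated_def eA_def by auto
    show False
    proof (cases "m' < m")
      case True
      then show ?thesis using j assms unfolding i_def rado_le_def gE_def by auto
    next
      case False
      then show ?thesis using j assms nh unfolding i_def rado_le_def gE_def
        by (auto split: if_splits)
    qed
  qed
qed

lemma part2: "\<exists>e. (\<forall>x\<in>rado_V. e x \<in> AM)
               \<and> (\<forall>x\<in>rado_V. \<forall>y\<in>rado_V. rado_le x y \<longleftrightarrow> dominated rado_le (e x) (e y))"
  apply (rule exI[of _ eA])
  using eA_AM eA_iff unfolding rado_V_def by auto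



lemma fst_bound:
  assumes A: "A \<in> AM_card m" and xA: "(a,b) \<in> A" shows "a < m"
proof (rule ccontr)
  assume "\<not> a < m"
  then have am: "m \<le> a" by simp
  have AM: "max_antichain_on rado_V rado_le A" and fin: "finite A" and card: "card A = m"
    using A unfolding AM_card_def AM_def by auto
  have ac: "antichain_on rado_V rado_le A" using AM unfolding max_antichain_on_def by auto
  have inj: "inj_on fst A"
  proof (rule inj_onI)
    fix x y assume "x \<in> A" "y \<in> A" "fst x = fst y"
    note h = this
    show "x = y"
    proof (rule ccontr)
      assume "x \<noteq> y"
      then have "\<not> rado_le x y \<and> \<not> rado_le y x" using ac h unfolding antichain_on_def by blast
      then show False using h(3) unfolding rado_le_def by auto
    qed
  qed
  have "\<not> {..<a} \<subseteq> fst ` A"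
  proof
    assume "{..<a} \<subseteq> fst ` A"
    moreover have "a \<in> fst ` A" using xA by (metis fst_conv image_eqI)
    moreover have "{..a} = insert a {..<a}" by auto
    ultimately have "{..a} \<subseteq> fst ` A" by simp
    then have "card {..a} \<le> card (fst ` A)" using fin by (intro card_mono) auto
    then show False using card card_image[OF inj] am by simp
  qed
  then obtain c where c: "c < a" "c \<notin> fst ` A" by auto
  define d where "d = Max (fst ` A) + c + 1"
  have dge: "fst y \<le> d" if "y \<in> A" for y
    using that fin unfolding d_def by (meson Max_ge finite_imageI image_eqI trans_le_add1)
  have AV: "A \<subseteq> rado_V" using ac unfolding antichain_on_def by auto
  have ac2: "antichain_on rado_V rado_le (insert (c,d) A)"
    unfolding antichain_on_def
  proof (rule conjI)
    show "insert (c,d) A \<subseteq> rado_V" using AV unfolding rado_V_def d_def by auto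
  next
    show "\<forall>x\<in>insert (c, d) A. \<forall>y\<in>insert (c, d) A. x \<noteq> y \<longrightarrow> \<not> rado_le x y \<and> \<not> rado_le y x"
    proof (intro ballI impI)
    fix x y assume x: "x \<in> insert (c,d) A" and y: "y \<in> insert (c,d) A" and xy: "x \<noteq> y"
    have key: "\<not> rado_le (c,d) z \<and> \<not> rado_le z (c,d)" if z: "z \<in> A" for z
    proof -
      obtain a' b' where zz: "z = (a',b')" by (cases z)
      have ne: "a' \<noteq> c" using c z zz by (metis fst_conv image_eqI)
      have ab: "a' < b'" using AV z zz unfolding rado_V_def by auto
      have "a' \<le> d" using dge[OF z] zz by simp
      moreover have "c \<le> b'"
      proof (cases "a' < c")
        case True
        have "z \<noteq> (a,b)" using True c zz by auto
        then have "\<not> rado_le (a',b') (a,b)" using ac z xA zz unfolding antichain_on_def by auto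
        then show ?thesis using c True unfolding rado_le_def by auto
      next
        case False then show ?thesis using ab ne by auto
      qed
      ultimately show ?thesis using ne unfolding rado_le_def zz by auto
    qed
    show "\<not> rado_le x y \<and> \<not> rado_le y x"
    proof (cases "x = (c,d)")
      case True
      then have "y \<in> A" using y xy by auto
      then show ?thesis using key True by auto
    next
      case False
      then have xA': "x \<in> A" using x by auto
      show ?thesis
      proof (cases "y = (c,d)")
        case True then show ?thesis using key xA' by auto
      next
        case False
        then have "y \<in> A" using y by auto
        then show ?thesis using xA' xy ac unfolding antichain_on_def by blast
      qed
    qed
    qed
  qed
  then have "insert (c,d) A = A" using AM unfolding max_antichain_on_def by auto
  then have "(c,d) \<in> A" by blast
  then show False using c by (metis fst_conv image_eqI)
qed



definition abv :: "nat set \<Rightarrow> nat set \<Rightarrow> nat set" where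
  "abv s N = {x\<in>N. \<forall>y\<in>s. y < x}"

lemma abv_sub: "abv s N \<subseteq> N" unfolding abv_def by auto

lemma abv_inf: assumes "finite s" "infinite N" shows "infinite (abv s N)"
proof -
  have "N - abv s N \<subseteq> (\<Union>y\<in>s. {..y})" unfolding abv_def by (auto simp: not_less)
  then have "finite (N - abv s N)" using assms(1) by (meson finite_UN_I finite_atMost finite_subset)
  then have "infinite (N - (N - abv s N))" using assms(2) by (rule Diff_infinite_finite)
  moreover have "N - (N - abv s N) = abv s N" using abv_sub by blast
  ultimately show ?thesis by simp
qed

definition mn :: "nat set \<Rightarrow> nat" where "mn M = (LEAST x. x \<in> M)"

lemma mn_in: assumes "M \<noteq> {}" shows "mn M \<in> M"
proof -
  obtain x where "x \<in> M" using assms by blast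
  then show ?thesis unfolding mn_def by (rule LeastI)
qed
lemma mn_le: "x \<in> M \<Longrightarrow> mn M \<le> x" unfolding mn_def by (simp add: Least_le)
lemma mn_inf: "infinite M \<Longrightarrow> mn M \<in> M" using mn_in[of M] by force

context
  fixes P :: "nat set \<Rightarrow> nat set \<Rightarrow> bool"
  assumes mono: "\<And>s M N. P s M \<Longrightarrow> N \<subseteq> M \<Longrightarrow> infinite N \<Longrightarrow> P s N"
  and dense: "\<And>s M. infinite M \<Longrightarrow> \<exists>N\<subseteq>M. infinite N \<and> P s N"
begin

lemma dense_fin:
  assumes fin: "finite S"
  shows "infinite M \<Longrightarrow> \<exists>N\<subseteq>M. infinite N \<and> (\<forall>s\<in>S. P s N)"
  using fin
proof (induction S arbitrary: M rule: finite_induct)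
  case empty then show ?case by auto
next
  case (insert s S)
  obtain N1 where N1: "N1 \<subseteq> M" "infinite N1" "\<forall>s\<in>S. P s N1" using insert by blast
  obtain N2 where N2: "N2 \<subseteq> N1" "infinite N2" "P s N2" using dense[OF N1(2)] by blast
  show ?case using N1 N2 mono by (intro exI[of _ N2]) blast
qed

lemma diag:
  assumes M: "infinite M"
  shows "\<exists>N\<subseteq>M. infinite N \<and> (\<forall>s. finite s \<and> s \<subseteq> N \<longrightarrow> P s (abv s N))"
proof -
  have ex: "\<exists>M'. infinite M \<longrightarrow> (M' \<subseteq> M \<and> infinite M' \<and> (\<forall>x\<in>M'. mn M < x) \<and> (\<forall>s. s \<subseteq> {..mn M} \<longrightarrow> P s M'))" for M
  proof (cases "infinite M")
    case True
    have i: "infinite (abv {mn M} M)" using abv_inf[OF _ True] by simp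
    have f: "finite (Pow {..mn M})" by simp
    obtain N where N: "N \<subseteq> abv {mn M} M" "infinite N" "\<forall>s\<in>Pow {..mn M}. P s N"
      using dense_fin[OF f i] by blast
    have "\<forall>x\<in>N. mn M < x" using N(1) unfolding abv_def by auto
    moreover have "N \<subseteq> M" using N(1) abv_sub by blast
    moreover have "\<forall>s. s \<subseteq> {..mn M} \<longrightarrow> P s N" using N(3) by simp
    ultimately show ?thesis using N(2) by blast
  qed auto
  have "\<exists>stp. \<forall>M. infinite M \<longrightarrow> stp M \<subseteq> M \<and> infinite (stp M) \<and> (\<forall>x\<in>stp M. mn M < x) \<and> (\<forall>s. s \<subseteq> {..mn M} \<longrightarrow> P s (stp M))"
    by (rule choice, rule allI, rule ex)
  then obtain stp where stp0: "\<forall>M. infinite M \<longrightarrow> stp M \<subseteq> M \<and> infinite (stp M) \<and> (\<forall>x\<in>stp M. mn M < x) \<and> (\<forall>s. s \<subseteq> {..mn M} \<longrightarrow> P s (stp M))"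
    by (elim exE)
  have stp: "stp M \<subseteq> M \<and> infinite (stp M) \<and> (\<forall>x\<in>stp M. mn M < x) \<and> (\<forall>s. s \<subseteq> {..mn M} \<longrightarrow> P s (stp M))"
    if "infinite M" for M using stp0 that by simp
  obtain M0 where M0: "M0 \<subseteq> M" "infinite M0" "P {} M0" using dense[OF M] by blast
  define Ms where "Ms k = (stp ^^ k) M0" for k
  have Ms_inf: "infinite (Ms k)" for k
    by (induction k) (auto simp: Ms_def M0 stp)
  have Ms_Suc: "Ms (Suc k) = stp (Ms k)" for k unfolding Ms_def by simp
  have Ms_dec: "Ms j \<subseteq> Ms k" if "k \<le> j" for j k
    using that
  proof (induction j)
    case 0 then show ?case by simp
  next
    case (Suc j)
    have "Ms (Suc j) \<subseteq> Ms j" using stp[OF Ms_inf[of j]] Ms_Suc[of j] by simp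
    show ?case
    proof (cases "k = Suc j")
      case True then show ?thesis by simp
    next
      case False then have "k \<le> j" using Suc.prems by simp
      then show ?thesis using Suc.IH \<open>Ms (Suc j) \<subseteq> Ms j\<close> by blast
    qed
  qed
  define n where "n k = mn (Ms k)" for k
  have n_in: "n k \<in> Ms k" for k unfolding n_def using Ms_inf[of k] mn_inf by blast
  have n_less: "n k < n (Suc k)" for k
    using stp[OF Ms_inf[of k]] n_in[of "Suc k"] unfolding Ms_Suc n_def by blast
  have smono: "strict_mono n" using n_less by (simp add: strict_mono_Suc_iff)
  define N where "N = range n"
  have NM: "N \<subseteq> M" using n_in Ms_dec[of 0] M0 unfolding N_def Ms_def by auto
  have Ninf: "infinite N"
  proof
    assume "finite N"
    moreover have "inj_on n UNIV" using smono by (rule strict_mono_imp_inj_on)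
    ultimately have "finite (UNIV :: nat set)" unfolding N_def by (rule finite_imageD)
    then show False by simp
  qed
  have "P s (abv s N)" if s: "finite s" "s \<subseteq> N" for s
  proof (cases "s = {}")
    case True
    have "abv s N = N" using True unfolding abv_def by auto
    moreover have "N \<subseteq> M0" using n_in Ms_dec[of 0] unfolding N_def by (auto simp: Ms_def)
    ultimately show ?thesis using M0 mono Ninf True by metis
  next
    case False
    have "Max s \<in> N" using s False Max_in by blast
    then obtain k where k: "Max s = n k" unfolding N_def by auto
    have "s \<subseteq> {..mn (Ms k)}" using s k Max_ge unfolding n_def by fastforce
    then have P1: "P s (Ms (Suc k))" using stp[OF Ms_inf[of k]] Ms_Suc by simp
    have "abv s N \<subseteq> Ms (Suc k)"
    proof
      fix x assume "x \<in> abv s N"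
      then have x1: "x \<in> N" and x2: "\<forall>y\<in>s. y < x" unfolding abv_def by auto
      obtain j where j1: "x = n j" using x1 unfolding N_def by auto
      have "Max s \<in> s" using s False by simp
      then have j: "x = n j" "n k < n j" using j1 x2 k by auto
      then have "k < j" using smono by (meson not_less_iff_gr_or_eq strict_mono_less)
      then show "x \<in> Ms (Suc k)" using Ms_dec[of "Suc k" j] n_in j by auto
    qed
    then show ?thesis using mono P1 abv_inf s Ninf by blast
  qed
  then show ?thesis using NM Ninf by blast
qed
end


definition acc :: "nat set set \<Rightarrow> nat set \<Rightarrow> nat set \<Rightarrow> bool" where
  "acc F s M = (\<forall>X. infinite X \<and> X \<subseteq> M \<longrightarrow> (\<exists>t\<in>F. initial_segment t (s \<union> X)))"

definition rej :: "nat set set \<Rightarrow> nat set \<Rightarrow> nat set \<Rightarrow> bool" where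
  "rej F s M = (\<forall>N. infinite N \<and> N \<subseteq> M \<longrightarrow> \<not> acc F s N)"

lemma acc_mono: "acc F s M \<Longrightarrow> N \<subseteq> M \<Longrightarrow> acc F s N"
  unfolding acc_def by blast

lemma rej_mono: "rej F s M \<Longrightarrow> N \<subseteq> M \<Longrightarrow> rej F s N"
  unfolding rej_def by blast

lemma abv_mono: "N \<subseteq> M \<Longrightarrow> abv s N \<subseteq> abv s M"
  unfolding abv_def by auto

lemma galvin:
  assumes finF: "\<forall>s\<in>F. finite s" and M: "infinite M"
  shows "\<exists>N\<subseteq>M. infinite N \<and> ((\<forall>s\<in>F. \<not> s \<subseteq> N)
           \<or> (\<forall>X. infinite X \<and> X \<subseteq> N \<longrightarrow> (\<exists>t\<in>F. initial_segment t X)))"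
proof -
  define P1 where "P1 s M = (acc F s M \<or> rej F s M)" for s M
  have "\<exists>N\<subseteq>M. infinite N \<and> (\<forall>s. finite s \<and> s \<subseteq> N \<longrightarrow> P1 s (abv s N))"
  proof (rule diag)
    show "P1 s N" if "P1 s M" "N \<subseteq> M" "infinite N" for s M N
      using that acc_mono rej_mono unfolding P1_def by metis
    show "\<exists>N\<subseteq>M. infinite N \<and> P1 s N" if "infinite M" for s M
    proof (cases "rej F s M")
      case True then show ?thesis using that unfolding P1_def by blast
    next
      case False then show ?thesis unfolding P1_def rej_def by blast
    qed
  qed (rule M)
  then obtain N1 where N1: "N1 \<subseteq> M" "infinite N1" and H1': "\<forall>s. finite s \<and> s \<subseteq> N1 \<longrightarrow> P1 s (abv s N1)"
    by (elim exE conjE)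
  have H1: "\<And>s. finite s \<Longrightarrow> s \<subseteq> N1 \<Longrightarrow> P1 s (abv s N1)" using H1' by simp
  have abv0: "abv {} N1 = N1" unfolding abv_def by simp
  show ?thesis
  proof (cases "acc F {} N1")
    case True
    then have "\<forall>X. infinite X \<and> X \<subseteq> N1 \<longrightarrow> (\<exists>t\<in>F. initial_segment t X)"
      unfolding acc_def by simp
    then show ?thesis using N1 by blast
  next
    case False
    then have rej0: "rej F {} N1" using H1[of "{}"] abv0 unfolding P1_def by simp
    have key: "finite {n \<in> abv s N1. acc F (insert n s) (abv (insert n s) N1)}"
      if s: "finite s" "s \<subseteq> N1" "rej F s (abv s N1)" for s
    proof (rule ccontr)
      define A where "A = {n \<in> abv s N1. acc F (insert n s) (abv (insert n s) N1)}"
      assume "infinite {n \<in> abv s N1. acc F (insert n s) (abv (insert n s) N1)}"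
      then have Ainf: "infinite A" unfolding A_def by simp
      have Asub: "A \<subseteq> abv s N1" unfolding A_def by auto
      have "acc F s A" unfolding acc_def
      proof (intro allI impI)
        fix X assume X: "infinite X \<and> X \<subseteq> A"
        define n0 where "n0 = mn X"
        have n0X: "n0 \<in> X" unfolding n0_def using X mn_inf by blast
        then have n0A: "n0 \<in> A" using X by blast
        then have accn: "acc F (insert n0 s) (abv (insert n0 s) N1)" unfolding A_def by simp
        have X'inf: "infinite (X - {n0})" using X by simp
        have X'sub: "X - {n0} \<subseteq> abv (insert n0 s) N1"
        proof
          fix x assume x: "x \<in> X - {n0}"
          then have "x \<in> abv s N1" using X Asub by blast
          moreover have "n0 < x" using x mn_le[of x X] unfolding n0_def by force
          ultimately show "x \<in> abv (insert n0 s) N1" unfolding abv_def by auto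
        qed
        obtain t where t: "t \<in> F" "initial_segment t (insert n0 s \<union> (X - {n0}))"
          using accn X'inf X'sub unfolding acc_def by blast
        have "insert n0 s \<union> (X - {n0}) = s \<union> X" using n0X by blast
        then show "\<exists>t\<in>F. initial_segment t (s \<union> X)" using t by auto
      qed
      then show False using s(3) Ainf Asub unfolding rej_def by blast
    qed
    define P2 where "P2 s M = (finite s \<and> s \<subseteq> N1 \<and> rej F s (abv s N1) \<longrightarrow>
        (\<forall>n\<in>M. n \<in> abv s N1 \<longrightarrow> rej F (insert n s) (abv (insert n s) N1)))" for s M
    have "\<exists>N\<subseteq>N1. infinite N \<and> (\<forall>s. finite s \<and> s \<subseteq> N \<longrightarrow> P2 s (abv s N))"
    proof (rule diag)
      show "P2 s N" if "P2 s M" "N \<subseteq> M" "infinite N" for s M N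
        using that unfolding P2_def by blast
      show "\<exists>N\<subseteq>M. infinite N \<and> P2 s N" if Minf: "infinite M" for s M
      proof (cases "finite s \<and> s \<subseteq> N1 \<and> rej F s (abv s N1)")
        case True
        define A where "A = {n \<in> abv s N1. acc F (insert n s) (abv (insert n s) N1)}"
        have Afin: "finite A" unfolding A_def using key True by blast
        have "infinite (M - A)" using Minf Afin by simp
        moreover have "P2 s (M - A)" unfolding P2_def
        proof (intro impI ballI)
          fix n assume n: "n \<in> M - A" "n \<in> abv s N1"
          have "finite (insert n s)" "insert n s \<subseteq> N1" using True n(2) unfolding abv_def by auto
          then have "P1 (insert n s) (abv (insert n s) N1)" using H1 by blast
          moreover have "\<not> acc F (insert n s) (abv (insert n s) N1)" using n unfolding A_def by blast
          ultimately show "rej F (insert n s) (abv (insert n s) N1)" unfolding P1_def by blast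
        qed
        ultimately show ?thesis by blast
      next
        case False then show ?thesis using Minf unfolding P2_def by blast
      qed
    qed (rule N1(2))
    then obtain N2 where N2: "N2 \<subseteq> N1" "infinite N2" and H2': "\<forall>s. finite s \<and> s \<subseteq> N2 \<longrightarrow> P2 s (abv s N2)"
      by (elim exE conjE)
    have H2: "\<And>s. finite s \<Longrightarrow> s \<subseteq> N2 \<Longrightarrow> P2 s (abv s N2)" using H2' by simp
    have allrej: "s \<subseteq> N2 \<longrightarrow> rej F s (abv s N1)" if "finite s" for s
      using that
    proof (induction s rule: finite_linorder_max_induct)
      case empty then show ?case using rej0 abv0 by simp
    next
      case (insert b A)
      show ?case
      proof
        assume bA: "insert b A \<subseteq> N2"
        then have A2: "A \<subseteq> N2" by simp
        then have rA: "rej F A (abv A N1)" using insert.IH by simp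
        have "P2 A (abv A N2)" using H2[OF insert.hyps(1) A2] .
        moreover have "A \<subseteq> N1" using A2 N2(1) by blast
        moreover have "b \<in> abv A N2" using bA insert.hyps(2) unfolding abv_def by auto
        moreover have "b \<in> abv A N1" using bA N2(1) insert.hyps(2) unfolding abv_def by auto
        ultimately show "rej F (insert b A) (abv (insert b A) N1)"
          using insert.hyps(1) rA unfolding P2_def by blast
      qed
    qed
    have "\<forall>s\<in>F. \<not> s \<subseteq> N2"
    proof (intro ballI notI)
      fix s assume sF: "s \<in> F" and sN: "s \<subseteq> N2"
      have fs: "finite s" using finF sF by blast
      have r: "rej F s (abv s N1)" using allrej[OF fs] sN by blast
      have inf: "infinite (abv s N1)" using abv_inf[OF fs N1(2)] .
      have "acc F s (abv s N1)" unfolding acc_def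
      proof (intro allI impI)
        fix X assume X: "infinite X \<and> X \<subseteq> abv s N1"
        have "initial_segment s (s \<union> X)"
          unfolding initial_segment_def
        proof (intro conjI ballI impI)
          show "s \<subseteq> s \<union> X" by blast
          fix x y assume "x \<in> s" "y \<in> s \<union> X" "y < x"
          then show "y \<in> s" using X unfolding abv_def by force
        qed
        then show "\<exists>t\<in>F. initial_segment t (s \<union> X)" using sF by blast
      qed
      then show False using r inf unfolding rej_def by blast
    qed
    then show ?thesis using N2 N1(1) by blast
  qed
qed



lemma initseg_cmp: "initial_segment s X \<Longrightarrow> initial_segment t X \<Longrightarrow> s \<subseteq> t \<or> t \<subseteq> s"
  unfolding initial_segment_def by (metis linorder_neqE_nat subsetI subset_iff)

lemma barrier_parts: assumes "barrier B" shows "infinite B" "\<forall>s\<in>B. finite s" "\<forall>s\<in>B. \<forall>t\<in>B. \<not> s \<subset> t"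
   "\<forall>X. infinite X \<and> X \<subseteq> \<Union>B \<longrightarrow> (\<exists>s\<in>B. s \<noteq> {} \<and> initial_segment s X)"
proof -
  note h = assms[unfolded barrier_def]
  show "infinite B" by (rule h[THEN conjunct1])
  show "\<forall>s\<in>B. finite s" by (rule h[THEN conjunct2, THEN conjunct1])
  show "\<forall>s\<in>B. \<forall>t\<in>B. \<not> s \<subset> t" by (rule h[THEN conjunct2, THEN conjunct2, THEN conjunct1])
  show "\<forall>X. infinite X \<and> X \<subseteq> \<Union>B \<longrightarrow> (\<exists>s\<in>B. s \<noteq> {} \<and> initial_segment s X)"
    by (rule h[THEN conjunct2, THEN conjunct2, THEN conjunct2])
qed

lemma barrier_eq:
  assumes B: "barrier B" and s: "s \<in> B" and t: "t \<in> B" and st: "s \<subseteq> t" shows "s = t"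
  using barrier_parts(3)[OF B] s t st by blast

lemma mono_color:
  fixes c :: "nat set \<Rightarrow> nat"
  assumes B: "barrier B" and S: "finite S"
  shows "infinite N \<Longrightarrow> N \<subseteq> \<Union>B \<Longrightarrow> (\<forall>s\<in>B. s \<subseteq> N \<longrightarrow> c s \<in> S) \<Longrightarrow>
    \<exists>N'\<subseteq>N. infinite N' \<and> (\<exists>i. \<forall>s\<in>B. s \<subseteq> N' \<longrightarrow> c s = i)"
  using S
proof (induction S arbitrary: N rule: finite_induct)
  case empty then show ?case by blast
next
  case (insert a S)
  have finF: "\<forall>s\<in>{s\<in>B. c s = a}. finite s" using barrier_parts(2)[OF B] by blast
  obtain N1 where N1: "N1 \<subseteq> N" "infinite N1" and
    alt: "(\<forall>s\<in>{s\<in>B. c s = a}. \<not> s \<subseteq> N1)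
           \<or> (\<forall>X. infinite X \<and> X \<subseteq> N1 \<longrightarrow> (\<exists>t\<in>{s\<in>B. c s = a}. initial_segment t X))"
    using galvin[OF finF insert.prems(1)] by blast
  show ?case
  proof (cases "\<forall>s\<in>{s\<in>B. c s = a}. \<not> s \<subseteq> N1")
    case True
    have h3: "\<forall>s\<in>B. s \<subseteq> N1 \<longrightarrow> c s \<in> S" using True insert.prems(3) N1(1) by blast
    have h2: "N1 \<subseteq> \<Union>B" using N1(1) insert.prems(2) by blast
    obtain N' where "N' \<subseteq> N1" "infinite N'" "\<exists>i. \<forall>s\<in>B. s \<subseteq> N' \<longrightarrow> c s = i"
      using insert.IH[OF N1(2) h2 h3] by blast
    then show ?thesis using N1(1) by blast
  next
    case False
    then have all: "\<forall>X. infinite X \<and> X \<subseteq> N1 \<longrightarrow> (\<exists>t\<in>{s\<in>B. c s = a}. initial_segment t X)"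
      using alt by blast
    have "c s = a" if sB: "s \<in> B" and sN: "s \<subseteq> N1" for s
    proof -
      have fs: "finite s" using barrier_parts(2)[OF B] sB by blast
      define X where "X = s \<union> abv s N1"
      have "infinite (abv s N1)" using abv_inf[OF fs N1(2)] .
      then have Xinf: "infinite X" unfolding X_def by simp
      have XN: "X \<subseteq> N1" unfolding X_def using sN abv_sub by blast
      obtain t where t: "t \<in> B" "c t = a" "initial_segment t X" using all[rule_format, OF conjI[OF Xinf XN]] by blast
      have sX: "initial_segment s X" unfolding initial_segment_def
      proof (intro conjI ballI impI)
        show "s \<subseteq> X" unfolding X_def by blast
        fix x y assume "x \<in> s" "y \<in> X" "y < x"
        then show "y \<in> s" unfolding X_def abv_def by force
      qed
      have "s \<subseteq> t \<or> t \<subseteq> s" using initseg_cmp[OF sX t(3)] .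
      then have "s = t"
      proof
        assume "s \<subseteq> t" then show "s = t" using barrier_eq[OF B sB t(1)] by simp
      next
        assume "t \<subseteq> s" then show "s = t" using barrier_eq[OF B t(1) sB] by simp
      qed
      then show ?thesis using t(2) by simp
    qed
    then have ca: "\<forall>s\<in>B. s \<subseteq> N1 \<longrightarrow> c s = a" by blast
    show ?thesis
      apply (rule exI[of _ N1])
      using N1 ca by blast
  qed
qed


lemma part1: "bqo_on (\<Union>(AM_card m)) rado_le"
  unfolding bqo_on_def
proof (intro allI impI)
  fix B :: "nat set set" and f :: "nat set \<Rightarrow> nat \<times> nat"
  assume H: "barrier B \<and> (\<forall>s\<in>B. f s \<in> \<Union>(AM_card m))"
  have Bb: "barrier B" using H by simp
  have fB: "\<And>s. s \<in> B \<Longrightarrow> f s \<in> \<Union>(AM_card m)" using H by simp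
  show "good_map rado_le B f"
  proof (rule ccontr)
    assume bad: "\<not> good_map rado_le B f"
    have bad': "\<not> rado_le (f s) (f t)" if "s \<in> B" "t \<in> B" "s \<lhd>\<^sub>B t" for s t
      using bad that unfolding good_map_def by blast
    define c where "c s = fst (f s)" for s
    have cm: "\<forall>s\<in>B. s \<subseteq> \<Union>B \<longrightarrow> c s \<in> {..<m}"
    proof (intro ballI impI)
      fix s assume sB: "s \<in> B"
      obtain A where A: "A \<in> AM_card m" "f s \<in> A" using fB[OF sB] by blast
      obtain a b where ab: "f s = (a,b)" by (cases "f s")
      have "a < m" using fst_bound[OF A(1)] A(2) ab by simp
      then show "c s \<in> {..<m}" unfolding c_def ab by simp
    qed
    have UBinf: "infinite (\<Union>B)"
    proof
      assume "finite (\<Union>B)"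
      then have "finite (Pow (\<Union>B))" by simp
      moreover have "B \<subseteq> Pow (\<Union>B)" by blast
      ultimately have "finite B" by (rule finite_subset[rotated])
      then show False using barrier_parts(1)[OF Bb] by simp
    qed
    have fm: "finite {..<m}" by simp
    note mc = mono_color[where c=c, OF Bb fm UBinf subset_refl cm]
    obtain N where N: "N \<subseteq> \<Union>B" "infinite N" and Ni: "\<exists>i. \<forall>s\<in>B. s \<subseteq> N \<longrightarrow> c s = i"
      using mc by auto
    obtain i where ci0: "\<forall>s\<in>B. s \<subseteq> N \<longrightarrow> c s = i" using Ni by (elim exE)
    have ci: "\<And>s. s \<in> B \<Longrightarrow> s \<subseteq> N \<Longrightarrow> c s = i" using ci0 by simp
    define Xs where "Xs k = ((\<lambda>X. X - {mn X}) ^^ k) N" for k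
    have Xs_Suc: "Xs (Suc k) = Xs k - {mn (Xs k)}" for k unfolding Xs_def by simp
    have Xs_inf: "infinite (Xs k)" for k
      by (induction k) (auto simp: Xs_Suc N(2) Xs_def)
    have Xs_sub: "Xs k \<subseteq> N" for k
      by (induction k) (auto simp: Xs_Suc Xs_def)
    have ex: "\<exists>s. s \<in> B \<and> s \<noteq> {} \<and> initial_segment s (Xs k)" for k
    proof -
      have "infinite (Xs k) \<and> Xs k \<subseteq> \<Union>B" using Xs_inf Xs_sub N(1) by blast
      then show ?thesis using barrier_parts(4)[OF Bb] by blast
    qed
    define ss where "ss k = (SOME s. s \<in> B \<and> s \<noteq> {} \<and> initial_segment s (Xs k))" for k
    have ss: "ss k \<in> B \<and> ss k \<noteq> {} \<and> initial_segment (ss k) (Xs k)" for k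
      unfolding ss_def by (rule someI_ex[OF ex])
    have ssN: "ss k \<subseteq> N" for k using ss[of k] Xs_sub[of k] unfolding initial_segment_def by blast
    have shift: "ss k \<lhd>\<^sub>B ss (Suc k)" for k
    proof -
      define X where "X = Xs k"
      define x0 where "x0 = mn X"
      define s where "s = ss k"
      define t where "t = ss (Suc k)"
      define r where "r = insert x0 t"
      have sB: "s \<in> B" and sne: "s \<noteq> {}" and sX: "initial_segment s X"
        using ss[of k] unfolding s_def X_def by auto
      have tB: "t \<in> B" and tX: "initial_segment t (X - {x0})"
        using ss[of "Suc k"] unfolding t_def X_def x0_def Xs_Suc by auto
      have x0X: "x0 \<in> X" unfolding x0_def X_def using mn_inf Xs_inf by blast
      have ft: "finite t" using barrier_parts(2)[OF Bb] tB by blast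
      have fr: "finite r" unfolding r_def using ft by simp
      have x0s: "x0 \<in> s"
      proof -
        obtain y where y: "y \<in> s" using sne by blast
        then have yX: "y \<in> X" using sX unfolding initial_segment_def by blast
        then have "x0 \<le> y" unfolding x0_def by (rule mn_le)
        then show ?thesis
        proof (cases "x0 < y")
          case True then show ?thesis using sX y x0X unfolding initial_segment_def by blast
        next
          case False then show ?thesis using y \<open>x0 \<le> y\<close> by simp
        qed
      qed
      have x0t: "x0 \<notin> t" using tX unfolding initial_segment_def by blast
      have tXs: "t \<subseteq> X - {x0}" using tX unfolding initial_segment_def by blast
      have rX: "initial_segment r X" unfolding initial_segment_def
      proof (intro conjI ballI impI)
        show "r \<subseteq> X" unfolding r_def using x0X tXs by blast
        fix x y assume x: "x \<in> r" and y: "y \<in> X" and yx: "y < x"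
        show "y \<in> r"
        proof (cases "y = x0")
          case True then show ?thesis unfolding r_def by simp
        next
          case False
          have "x \<noteq> x0" using yx mn_le[OF y] unfolding x0_def by auto
          then have "x \<in> t" using x unfolding r_def by simp
          then have "y \<in> t" using tX y False yx unfolding initial_segment_def by blast
          then show ?thesis unfolding r_def by simp
        qed
      qed
      have Minr: "Min r = x0"
      proof (rule Min_eqI[OF fr])
        fix y assume "y \<in> r"
        then have "y \<in> X" using rX unfolding initial_segment_def by blast
        then show "x0 \<le> y" unfolding x0_def by (rule mn_le)
      qed (simp add: r_def)
      have "t = r - {x0}" unfolding r_def using x0t by simp
      then have trm: "t = r - {Min r}" using Minr by simp
      have notrs: "\<not> r \<subseteq> s"
      proof
        assume "r \<subseteq> s"
        then have "t \<subseteq> s" unfolding r_def by simp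
        moreover have "t \<noteq> s" using x0s x0t by blast
        ultimately have "t \<subset> s" by blast
        then show False using barrier_parts(3)[OF Bb] tB sB by blast
      qed
      then have "s \<subseteq> r" using initseg_cmp[OF sX rX] by blast
      then have "initial_segment s r"
        using sX rX unfolding initial_segment_def by blast
      moreover have "s \<noteq> r" using notrs by blast
      ultimately have "s \<lhd>\<^sub>B t" unfolding shift_rel_def using fr trm by blast
      then show ?thesis unfolding s_def t_def .
    qed
    have dec: "snd (f (ss (Suc k))) < snd (f (ss k))" for k
    proof -
      have nl: "\<not> rado_le (f (ss k)) (f (ss (Suc k)))"
        using bad'[of "ss k" "ss (Suc k)"] ss[of k] ss[of "Suc k"] shift[of k] by simp
      have "c (ss k) = i" using ci[of "ss k"] ss[of k] ssN[of k] by simp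
      moreover have "c (ss (Suc k)) = i" using ci[of "ss (Suc k)"] ss[of "Suc k"] ssN[of "Suc k"] by simp
      ultimately have "fst (f (ss k)) = fst (f (ss (Suc k)))" unfolding c_def by simp
      then show ?thesis using nl unfolding rado_le_def by auto
    qed
    have desc: "snd (f (ss k)) + k \<le> snd (f (ss 0))" for k
    proof (induction k)
      case 0 then show ?case by simp
    next
      case (Suc k) then show ?case using dec[of k] by simp
    qed
    show False using desc[of "Suc (snd (f (ss 0)))"] by simp
  qed
qed


theorem lemma6p5:
  shows "(\<forall>m::nat. bqo_on (\<Union>(AM_card m)) rado_le)
         \<and> (\<exists>e. (\<forall>x\<in>rado_V. e x \<in> AM)
               \<and> (\<forall>x\<in>rado_V. \<forall>y\<in>rado_V. rado_le x y \<longleftrightarrow> dominated rado_le (e x) (e y)))"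
  using part1 part2 by blast

end
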